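(* Let $0<\gamma<1$ and integers $n\ge p\ge2$. Then $$\|B_\gamma^{(p)}\|_F^2\le n+\frac{n}{\Gamma(1-\gamma)^2}H_{p-1}^{(2\gamma)}+\frac{(n-p)(n-p+1)}{2\,\Gamma(1-\gamma)^2}\cdot\frac{1}{(p-1)^{2\gamma}},$$ where $H_m^{(s)}:=\sum_{r=1}^m r^{-s}$. Moreover there is an absolute constant $K$ (independent of $n,p,\gamma$) such that $$\frac{\|B_\gamma^{(p)}\|_F}{\sqrt n}\le\begin{cases}K\,p^{-\gamma}\left(\sqrt{\frac{p}{1/2-\gamma}}+\sqrt n\right), & 0<\gamma<\tfrac12,\\[2pt] K\left(\sqrt{\log p}+\sqrt{n/p}\right), & \gamma=\tfrac12,\\[2pt] K\left(\frac{1}{\sqrt{\gamma-1/2}}+(1-\gamma)\sqrt n\,p^{-\gamma}\right), & \tfrac12<\gamma<1.\end{cases}$$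
   Context: $\log$ is the natural logarithm and $\Gamma$ the Gamma function. $E\in\mathbb{R}^{n\times n}$ is the lower-triangular all-ones (prefix-sum) matrix. $(\tilde c_\gamma)_i:=(-1)^i\binom{\gamma}{i}$ with $\binom{\gamma}{i}=\prod_{j=1}^{i}\frac{\gamma+1-j}{j}$. $(C_\gamma^{(p)})^{-1}$ is the $n\times n$ lower-triangular Toeplitz matrix whose $r$-th subdiagonal ($r=0$ the main diagonal) equals $(\tilde c_\gamma)_r$ for $r\le p-1$ and $0$ for $r\ge p$, and $B_\gamma^{(p)}:=E\,(C_\gamma^{(p)})^{-1}$. *)

theory Defs
  imports "HOL-Analysis.Analysis"
begin

text \<open>Matrices are n x n with indices 0..n-1, represented as nat => nat => real.\<close>

definition ctilde :: "real \<Rightarrow> nat \<Rightarrow> real" where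
  "ctilde \<gamma> i = (-1) ^ i * (\<gamma> gchoose i)"

definition Emat :: "nat \<Rightarrow> nat \<Rightarrow> real" where
  "Emat i j = (if j \<le> i then 1 else 0)"

text \<open>(C_gamma^(p))^{-1}: banded lower-triangular Toeplitz matrix.\<close>
definition Cinv :: "real \<Rightarrow> nat \<Rightarrow> nat \<Rightarrow> nat \<Rightarrow> real" where
  "Cinv \<gamma> p i j = (if j \<le> i \<and> i - j \<le> p - 1 then ctilde \<gamma> (i - j) else 0)"

definition Bmat :: "real \<Rightarrow> nat \<Rightarrow> nat \<Rightarrow> nat \<Rightarrow> nat \<Rightarrow> real" where
  "Bmat \<gamma> p n i j = (\<Sum>k<n. Emat i k * Cinv \<gamma> p k j)"

definition frob_norm :: "nat \<Rightarrow> (nat \<Rightarrow> nat \<Rightarrow> real) \<Rightarrow> real" where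
  "frob_norm n A = sqrt (\<Sum>i<n. \<Sum>j<n. (A i j)\<^sup>2)"

definition genharm :: "nat \<Rightarrow> real \<Rightarrow> real" where
  "genharm m s = (\<Sum>r=1..m. 1 / (real r powr s))"

end

theory Submission
  imports Defs
begin

definition aa :: "real \<Rightarrow> nat \<Rightarrow> real" where
  "aa g m = (\<Prod>j<m. 1 - g / real (Suc j))"

lemma gch_Suc: "(a::real) gchoose (Suc k) = (a gchoose k) * (a - real k) / real (Suc k)"
proof -
  have "(a gchoose (Suc k)) * fact (Suc k) = (\<Prod>i = 0..<Suc k. a - of_nat i)"
    by (rule gbinomial_mult_fact')
  also have "\<dots> = (\<Prod>i = 0..<k. a - of_nat i) * (a - real k)" by simp
  also have "\<dots> = (a gchoose k) * fact k * (a - real k)" by (simp add: gbinomial_mult_fact')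
  finally have "((a gchoose (Suc k)) * real (Suc k)) * fact k = ((a gchoose k) * (a - real k)) * fact k"
    by (simp add: fact_Suc algebra_simps)
  then have "(a gchoose (Suc k)) * real (Suc k) = (a gchoose k) * (a - real k)"
    by (metis fact_nonzero mult_right_cancel)
  then show ?thesis by (simp add: field_simps)
qed

lemma ct_Suc: "ctilde g (Suc m) = - g / real (Suc m) * aa g m"
proof (induction m)
  case 0
  then show ?case by (simp add: ctilde_def aa_def)
next
  case (Suc m)
  have "ctilde g (Suc (Suc m)) = - ctilde g (Suc m) * (g - real (Suc m)) / real (Suc (Suc m))"
    unfolding ctilde_def by (subst gch_Suc) (simp add: field_simps)
  also have "\<dots> = - g / real (Suc (Suc m)) * aa g (Suc m)"
    unfolding Suc aa_def by (simp add: field_simps) (simp add: minus_divide_left algebra_simps)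
  finally show ?case .
qed

lemma aa_Suc: "aa g (Suc m) = aa g m + ctilde g (Suc m)"
  unfolding ct_Suc by (simp add: aa_def field_simps)

lemma aa_0[simp]: "aa g 0 = 1" by (simp add: aa_def)

lemma ctilde_0[simp]: "ctilde g 0 = 1" by (simp add: ctilde_def)

lemma Fsum: "(\<Sum>k\<le>i. Cinv g p k j) = (if j \<le> i then aa g (min (i - j) (p - 1)) else 0)"
proof (induction i)
  case 0
  then show ?case by (simp add: Cinv_def)
next
  case (Suc i)
  show ?case
  proof (cases "j \<le> i")
    case True
    then show ?thesis using Suc
      by (auto simp: Cinv_def Suc_diff_le aa_Suc min_def) (metis le_antisym not_less_eq_eq)
  next
    case False
    then show ?thesis using Suc by (auto simp: Cinv_def not_le le_Suc_eq)
  qed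
qed

lemma Bmat_eq: assumes "i < n" shows "Bmat g p n i j = (if j \<le> i then aa g (min (i - j) (p - 1)) else 0)"
proof -
  have "Bmat g p n i j = (\<Sum>k\<in>{..<n}. if k \<le> i then Cinv g p k j else 0)"
    unfolding Bmat_def Emat_def by (intro sum.cong) auto
  also have "\<dots> = (\<Sum>k\<in>{..<n} \<inter> {k. k \<le> i}. Cinv g p k j)"
    by (simp add: sum.inter_restrict)
  also have "{..<n} \<inter> {k. k \<le> i} = {..i}" using assms by auto
  finally show ?thesis using Fsum by simp
qed



lemma frob_sq: "(frob_norm n (Bmat g p n))\<^sup>2 = (\<Sum>i<n. \<Sum>d\<le>i. (aa g (min d (p - 1)))\<^sup>2)"
proof -
  have "(frob_norm n (Bmat g p n))\<^sup>2 = (\<Sum>i<n. \<Sum>j<n. (Bmat g p n i j)\<^sup>2)"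
    unfolding frob_norm_def by (simp add: sum_nonneg)
  also have "\<dots> = (\<Sum>i<n. \<Sum>d\<le>i. (aa g (min d (p - 1)))\<^sup>2)"
  proof (rule sum.cong[OF refl])
    fix i assume i: "i \<in> {..<n}"
    have "(\<Sum>j<n. (Bmat g p n i j)\<^sup>2) = (\<Sum>j<n. if j \<le> i then (aa g (min (i - j) (p - 1)))\<^sup>2 else 0)"
      using i by (intro sum.cong refl) (auto simp add: Bmat_eq)
    also have "\<dots> = (\<Sum>j\<in>{..<n} \<inter> {j. j \<le> i}. (aa g (min (i - j) (p - 1)))\<^sup>2)"
      by (subst sum.inter_restrict) (auto intro!: sum.cong)
    also have "{..<n} \<inter> {j. j \<le> i} = {..<Suc i}" using i by auto
    also have "(\<Sum>j<Suc i. (aa g (min (i - j) (p - 1)))\<^sup>2)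
        = (\<Sum>d<Suc i. (aa g (min (i - (Suc i - Suc d)) (p - 1)))\<^sup>2)"
      by (rule sum.nat_diff_reindex[symmetric])
    also have "\<dots> = (\<Sum>d<Suc i. (aa g (min d (p - 1)))\<^sup>2)"
      by (intro sum.cong refl) auto
    finally show "(\<Sum>j<n. (Bmat g p n i j)\<^sup>2) = (\<Sum>d\<le>i. (aa g (min d (p - 1)))\<^sup>2)"
      using lessThan_Suc_atMost by simp
  qed
  finally show ?thesis .
qed

lemma rowbound:
  fixes c g :: "nat \<Rightarrow> real"
  assumes p: "2 \<le> p" and c0: "c 0 \<le> 1"
    and cg: "\<And>d. 1 \<le> d \<Longrightarrow> d \<le> p - 1 \<Longrightarrow> c d \<le> g d"
    and ct: "\<And>d. p - 1 \<le> d \<Longrightarrow> c d \<le> g (p - 1)"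
  shows "(\<Sum>d\<le>i. c d) \<le> 1 + (\<Sum>d=1..min i (p - 1). g d) + real (i - (p - 1)) * g (p - 1)"
proof (induction i)
  case 0
  then show ?case using c0 by simp
next
  case (Suc i)
  show ?case
  proof (cases "Suc i \<le> p - 1")
    case True
    then have "min (Suc i) (p - 1) = Suc (min i (p - 1))" "i - (p - 1) = 0" "Suc i - (p - 1) = 0" by auto
    then show ?thesis using Suc cg[of "Suc i"] True by simp
  next
    case False
    then have e: "min (Suc i) (p - 1) = min i (p - 1)" "real (Suc i - (p - 1)) = real (i - (p - 1)) + 1"
      by auto
    show ?thesis using Suc ct[of "Suc i"] False unfolding e by (simp add: algebra_simps)
  qed
qed

lemma trisum: "(\<Sum>i<n. real (i - (p - 1))) = real ((n - p) * (n - p + 1)) / 2" if "1 \<le> p"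
proof (induction n)
  case 0
  then show ?case by simp
next
  case (Suc n)
  show ?case
  proof (cases "p \<le> n")
    case True
    then obtain t where t: "n = p + t" using le_Suc_ex by blast
    have "n - (p - 1) = t + 1" "Suc n - p = t + 1" "n - p = t" using t that by auto
    then show ?thesis using Suc by (simp add: field_simps)
  next
    case False
    then have "n - (p - 1) = 0" "Suc n - p = 0" "n - p = 0" by auto
    then show ?thesis using Suc by simp
  qed
qed

lemma totalbound:
  fixes c g :: "nat \<Rightarrow> real"
  assumes p: "2 \<le> p" and c0: "c 0 \<le> 1"
    and cg: "\<And>d. 1 \<le> d \<Longrightarrow> d \<le> p - 1 \<Longrightarrow> c d \<le> g d"
    and ct: "\<And>d. p - 1 \<le> d \<Longrightarrow> c d \<le> g (p - 1)"
    and gnn: "\<And>d. 0 \<le> g d"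
  shows "(\<Sum>i<n. \<Sum>d\<le>i. c d) \<le> real n + real n * (\<Sum>d=1..p - 1. g d)
           + real ((n - p) * (n - p + 1)) / 2 * g (p - 1)"
proof -
  have "(\<Sum>i<n. \<Sum>d\<le>i. c d) \<le> (\<Sum>i<n. 1 + (\<Sum>d=1..p - 1. g d) + real (i - (p - 1)) * g (p - 1))"
  proof (intro sum_mono)
    fix i
    have "(\<Sum>d=1..min i (p - 1). g d) \<le> (\<Sum>d=1..p - 1. g d)"
      by (intro sum_mono2) (auto intro: gnn)
    then show "(\<Sum>d\<le>i. c d) \<le> 1 + (\<Sum>d=1..p - 1. g d) + real (i - (p - 1)) * g (p - 1)"
      using rowbound[OF p c0 cg ct, of i] by linarith
  qed
  also have "\<dots> = real n + real n * (\<Sum>d=1..p - 1. g d) + (\<Sum>i<n. real (i - (p - 1))) * g (p - 1)"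
    by (simp add: sum.distrib sum_distrib_right distrib_left)
  also have "\<dots> = real n + real n * (\<Sum>d=1..p - 1. g d) + real ((n - p) * (n - p + 1)) / 2 * g (p - 1)"
    using p by (subst trisum) auto
  finally show ?thesis .
qed



lemma aa_pos: assumes "0 < g" "g < 1" shows "0 < aa g m"
  unfolding aa_def using assms by (intro prod_pos) (auto simp: field_simps)

lemma pos_notnonpos: "(x::real) > 0 \<Longrightarrow> x \<notin> \<int>\<^sub>\<le>\<^sub>0"
  by (auto elim!: nonpos_Ints_cases)

lemma aa_Gamma: assumes "g < 1" shows "Gamma (1 - g) * aa g m = Gamma (real m + 1 - g) / fact m"
proof (induction m)
  case 0
  then show ?case by simp
next
  case (Suc m)
  have G: "Gamma (real (Suc m) + 1 - g) = (real m + 1 - g) * Gamma (real m + 1 - g)"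
    using Gamma_plus1[OF pos_notnonpos[of "real m + 1 - g"]] assms by (simp add: algebra_simps)
  have "Gamma (1 - g) * aa g (Suc m) = (Gamma (1 - g) * aa g m) * (1 - g / real (Suc m))"
    by (simp add: aa_def)
  also have "\<dots> = Gamma (real m + 1 - g) / fact m * ((real m + 1 - g) / real (Suc m))"
    unfolding Suc by (simp add: field_simps)
  also have "\<dots> = Gamma (real (Suc m) + 1 - g) / fact (Suc m)"
    unfolding G by (simp add: fact_Suc field_simps)
  finally show ?case .
qed

lemma Gamma_logconv: assumes "1 \<le> d" "0 < g" "g < 1"
  shows "Gamma (real d + 1 - g) \<le> fact d * real d powr (-g)"
proof -
  have d: "real d > 0" using assms by simp
  have "(ln \<circ> Gamma) ((1 - g) *\<^sub>R (real d + 1) + g *\<^sub>R real d)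
      \<le> (1 - g) * (ln \<circ> Gamma) (real d + 1) + g * (ln \<circ> Gamma) (real d)"
    using assms d by (intro convex_onD[OF log_convex_Gamma_real]) auto
  moreover have "(1 - g) *\<^sub>R (real d + 1) + g *\<^sub>R real d = real d + 1 - g"
    by (simp add: algebra_simps)
  moreover have "Gamma (real d + 1) = fact d"
    using Gamma_fact[of d] by (simp add: add.commute)
  moreover have "Gamma (real d) = fact d / real d"
  proof -
    have "Gamma (real d + 1) = real d * Gamma (real d)"
      using Gamma_plus1[OF pos_notnonpos[OF d]] .
    then show ?thesis using \<open>Gamma (real d + 1) = fact d\<close> d by (simp add: field_simps)
  qed
  ultimately have "ln (Gamma (real d + 1 - g)) \<le> (1 - g) * ln (fact d) + g * ln (fact d / real d)"
    by simp
  also have "\<dots> = ln (fact d) - g * ln (real d)"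
    using d by (simp add: ln_div algebra_simps)
  finally have "exp (ln (Gamma (real d + 1 - g))) \<le> exp (ln (fact d) - g * ln (real d))"
    by simp
  moreover have "Gamma (real d + 1 - g) > 0" using assms by simp
  moreover have "exp (ln (fact d) - g * ln (real d)) = fact d * real d powr (-g)"
    using d by (simp add: exp_diff powr_def exp_minus divide_inverse)
  ultimately show ?thesis by simp
qed

lemma aa_sq_bound: assumes "1 \<le> d" "0 < g" "g < 1"
  shows "(aa g d)\<^sup>2 \<le> 1 / (Gamma (1 - g))\<^sup>2 * (1 / real d powr (2 * g))"
proof -
  have Gp: "Gamma (1 - g) > 0" using assms by simp
  have d: "real d > 0" using assms by simp
  have "fact d * (Gamma (1 - g) * aa g d) \<le> fact d * real d powr (-g)"
    using aa_Gamma[of g d] Gamma_logconv[OF assms] assms by (simp add: field_simps)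
  then have "Gamma (1 - g) * aa g d \<le> real d powr (-g)"
    by (simp add: mult_le_cancel_left_pos)
  then have "aa g d \<le> real d powr (-g) / Gamma (1 - g)" using Gp by (simp add: field_simps)
  then have "(aa g d)\<^sup>2 \<le> (real d powr (-g) / Gamma (1 - g))\<^sup>2"
    using aa_pos[of g d] assms by (intro power_mono) auto
  also have "\<dots> = 1 / (Gamma (1 - g))\<^sup>2 * (1 / real d powr (2 * g))"
    using d by (simp add: power_divide powr_minus_divide power2_eq_square powr_add[symmetric] field_simps)
  finally show ?thesis .
qed

lemma part1:
  assumes "0 < g" "g < 1" "2 \<le> p" "p \<le> n"
  shows "(frob_norm n (Bmat g p n))\<^sup>2
              \<le> real n + real n / (Gamma (1 - g))\<^sup>2 * genharm (p - 1) (2 * g)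
                + real ((n - p) * (n - p + 1)) / (2 * (Gamma (1 - g))\<^sup>2)
                  * (1 / (real (p - 1) powr (2 * g)))"
proof -
  define gf where "gf d = 1 / (Gamma (1 - g))\<^sup>2 * (1 / real d powr (2 * g))" for d
  have "(frob_norm n (Bmat g p n))\<^sup>2 \<le> real n + real n * (\<Sum>d=1..p - 1. gf d)
           + real ((n - p) * (n - p + 1)) / 2 * gf (p - 1)"
    unfolding frob_sq
  proof (rule totalbound[OF assms(3)])
    show "(aa g (min 0 (p - 1)))\<^sup>2 \<le> 1" by simp
    fix d
    show "1 \<le> d \<Longrightarrow> d \<le> p - 1 \<Longrightarrow> (aa g (min d (p - 1)))\<^sup>2 \<le> gf d"
      using aa_sq_bound[of d g] assms unfolding gf_def by (simp add: min_def)
    show "p - 1 \<le> d \<Longrightarrow> (aa g (min d (p - 1)))\<^sup>2 \<le> gf (p - 1)"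
      using aa_sq_bound[of "p - 1" g] assms unfolding gf_def by (simp add: min_def)
    show "0 \<le> gf d" unfolding gf_def by simp
  qed
  also have "\<dots> = real n + real n / (Gamma (1 - g))\<^sup>2 * genharm (p - 1) (2 * g)
                + real ((n - p) * (n - p + 1)) / (2 * (Gamma (1 - g))\<^sup>2)
                  * (1 / (real (p - 1) powr (2 * g)))"
    unfolding gf_def genharm_def by (simp add: sum_distrib_left field_simps)
  finally show ?thesis .
qed



lemma aa_harm: assumes "0 < g" "g < 1"
  shows "aa g (Suc k) \<le> (1 - g) * exp g * exp (- g * harm (Suc k))"
proof (induction k)
  case 0
  then show ?case by (simp add: aa_def harm_def exp_minus field_simps)
next
  case (Suc k)
  have f: "1 - g / real (Suc (Suc k)) \<le> exp (- g / real (Suc (Suc k)))"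
    using exp_ge_add_one_self[of "- g / real (Suc (Suc k))"] by simp
  have f0: "0 \<le> 1 - g / real (Suc (Suc k))" using assms by (simp add: field_simps)
  have "aa g (Suc (Suc k)) = aa g (Suc k) * (1 - g / real (Suc (Suc k)))"
    by (simp add: aa_def)
  also have "\<dots> \<le> ((1 - g) * exp g * exp (- g * harm (Suc k))) * exp (- g / real (Suc (Suc k)))"
    using Suc f f0 aa_pos[OF assms, of "Suc k"] by (intro mult_mono) auto
  also have "\<dots> = (1 - g) * exp g * exp (- g * harm (Suc (Suc k)))"
    by (simp add: harm_Suc algebra_simps exp_add[symmetric] divide_inverse)
  finally show ?case .
qed

lemma aa_bound2: assumes "0 < g" "g < 1" "1 \<le> d"
  shows "aa g d \<le> exp 1 * (1 - g) * real (d + 1) powr (-g)"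
proof -
  obtain k where k: "d = Suc k" using assms by (cases d) auto
  have "aa g d \<le> (1 - g) * exp g * exp (- g * harm d)" using aa_harm[OF assms(1,2)] k by simp
  also have "\<dots> \<le> exp 1 * (1 - g) * real (d + 1) powr (-g)"
  proof -
    have "exp (- g * harm d) \<le> exp (- g * ln (real d + 1))"
      using ln_le_harm[of d] assms by simp
    also have "\<dots> = real (d + 1) powr (-g)" by (simp add: powr_def add.commute)
    finally have a: "exp (- g * harm d) \<le> real (d + 1) powr (-g)" .
    have b: "exp g \<le> exp 1" using assms by simp
    have c: "exp g * exp (- g * harm d) \<le> exp 1 * real (d + 1) powr (-g)"
      using mult_mono[OF b a] by simp
    show ?thesis using mult_left_mono[OF c, of "1 - g"] assms by (simp add: algebra_simps)
  qed
  finally show ?thesis .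
qed

lemma sumint:
  fixes F :: "real \<Rightarrow> real"
  assumes s: "0 \<le> s" and der: "\<And>x. 1 \<le> x \<Longrightarrow> (F has_real_derivative x powr (-s)) (at x)"
    and m: "1 \<le> m"
  shows "(\<Sum>k=1..m. real k powr (-s)) \<le> 1 + F (real m) - F 1"
  using m
proof (induction m rule: dec_induct)
  case base
  then show ?case by simp
next
  case (step m)
  have "real m < real (Suc m)" by simp
  then obtain z where z: "real m < z" "z < real (Suc m)"
    "F (real (Suc m)) - F (real m) = (real (Suc m) - real m) * z powr (-s)"
    using MVT2[of "real m" "real (Suc m)" F "\<lambda>x. x powr (-s)"] der step(1) by force
  have "real (Suc m) powr (-s) \<le> z powr (-s)"
    using z step(1) s by (intro powr_mono2') auto
  then have "real (Suc m) powr (-s) \<le> F (real (Suc m)) - F (real m)" using z(3) by simp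
  then show ?case using step by simp
qed

lemma Gbound_lt: assumes "0 < s" "s < 1" "1 \<le> m"
  shows "(\<Sum>k=1..m. real k powr (-s)) \<le> real m powr (1 - s) / (1 - s)"
proof -
  have "(\<Sum>k=1..m. real k powr (-s)) \<le> 1 + real m powr (1 - s) / (1 - s) - 1 powr (1 - s) / (1 - s)"
  proof (rule sumint[where F = "\<lambda>x. x powr (1 - s) / (1 - s)"])
    fix x :: real assume "1 \<le> x"
    then show "((\<lambda>x. x powr (1 - s) / (1 - s)) has_real_derivative x powr (-s)) (at x)"
      using has_real_derivative_powr[of x "1 - s"] assms
      by (auto intro!: derivative_eq_intros)
  qed (use assms in auto)
  moreover have "1 \<le> 1 / (1 - s)" using assms by (simp add: field_simps)
  ultimately show ?thesis by simp
qed

lemma Gbound_eq: assumes "1 \<le> m"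
  shows "(\<Sum>k=1..m. real k powr (-1)) \<le> 1 + ln (real m)"
proof -
  have "(\<Sum>k=1..m. real k powr (-1)) \<le> 1 + ln (real m) - ln 1"
  proof (rule sumint[where F = ln])
    fix x :: real assume "1 \<le> x"
    then show "(ln has_real_derivative x powr (-1)) (at x)"
      by (auto intro!: derivative_eq_intros simp: powr_minus_divide)
  qed (use assms in auto)
  then show ?thesis by simp
qed

lemma Gbound_gt: assumes "1 < s" "1 \<le> m"
  shows "(\<Sum>k=1..m. real k powr (-s)) \<le> 1 + 1 / (s - 1)"
proof -
  have "(\<Sum>k=1..m. real k powr (-s)) \<le> 1 + (- (real m powr (1 - s) / (s - 1))) - (- (1 powr (1 - s) / (s - 1)))"
  proof (rule sumint[where F = "\<lambda>x. - (x powr (1 - s) / (s - 1))"])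
    fix x :: real assume "1 \<le> x"
    then have "((\<lambda>x. - (x powr (1 - s) / (s - 1))) has_real_derivative - ((1 - s) * x powr (1 - s - 1) / (s - 1))) (at x)"
      by (intro DERIV_minus DERIV_cdivide has_real_derivative_powr) auto
    moreover have "- ((1 - s) * x powr (1 - s - 1) / (s - 1)) = x powr (-s)"
      using assms by (simp add: field_simps)
    ultimately show "((\<lambda>x. - (x powr (1 - s) / (s - 1))) has_real_derivative x powr (-s)) (at x)"
      by simp
  qed (use assms in auto)
  moreover have "0 \<le> real m powr (1 - s) / (s - 1)" using assms by simp
  ultimately show ?thesis by simp
qed



lemma part2_core:
  assumes g: "0 < g" "g < 1" and p: "2 \<le> p" "p \<le> n"
  shows "frob_norm n (Bmat g p n) / sqrt (real n)
     \<le> 4 * sqrt (\<Sum>k=1..p. real k powr (-(2 * g))) + 4 * ((1 - g) * sqrt (real n) * real p powr (-g))"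
proof -
  define G where "G = (\<Sum>k=1..p. real k powr (-(2 * g)))"
  define X where "X = (1 - g) * sqrt (real n) * real p powr (-g)"
  define gf where "gf d = (exp 1)\<^sup>2 * (1 - g)\<^sup>2 * real (d + 1) powr (-(2 * g))" for d
  have n0: "real n > 0" using p by simp
  have X0: "0 \<le> X" using g unfolding X_def by simp
  have X2: "X\<^sup>2 = (1 - g)\<^sup>2 * real n * real p powr (-(2 * g))"
  proof -
    have pp: "real p powr (-(2 * g)) = real p powr (-g) * real p powr (-g)"
      by (simp add: powr_add[symmetric])
    show ?thesis unfolding X_def pp using n0 by (simp add: power_mult_distrib power2_eq_square)
  qed
  have G1: "1 \<le> G"
  proof -
    have "(\<lambda>k. real k powr (-(2 * g))) 1 \<le> G" unfolding G_def
      using p by (intro member_le_sum) auto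
    then show ?thesis by simp
  qed
  have sqb: "(aa g d)\<^sup>2 \<le> gf d" if "1 \<le> d" for d
  proof -
    have "(aa g d)\<^sup>2 \<le> (exp 1 * (1 - g) * real (d + 1) powr (-g))\<^sup>2"
      using aa_bound2[OF g that] aa_pos[OF g, of d] by (intro power_mono) auto
    also have "\<dots> = gf d" unfolding gf_def
      by (simp add: power_mult_distrib powr_add[symmetric] power2_eq_square)
    finally show ?thesis .
  qed
  have "(frob_norm n (Bmat g p n))\<^sup>2 \<le> real n + real n * (\<Sum>d=1..p - 1. gf d)
           + real ((n - p) * (n - p + 1)) / 2 * gf (p - 1)"
    unfolding frob_sq
  proof (rule totalbound[OF p(1)])
    show "(aa g (min 0 (p - 1)))\<^sup>2 \<le> 1" by simp
    fix d
    show "1 \<le> d \<Longrightarrow> d \<le> p - 1 \<Longrightarrow> (aa g (min d (p - 1)))\<^sup>2 \<le> gf d"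
      using sqb[of d] by (simp add: min_def)
    show "p - 1 \<le> d \<Longrightarrow> (aa g (min d (p - 1)))\<^sup>2 \<le> gf (p - 1)"
      using sqb[of "p - 1"] p by (simp add: min_def)
    show "0 \<le> gf d" unfolding gf_def by simp
  qed
  also have "\<dots> \<le> real n + real n * (9 * G) + real n * (9 * X\<^sup>2)"
  proof -
    have e2: "(exp 1)\<^sup>2 \<le> (9::real)"
      using exp_le power_mono[of "exp 1" "3::real" 2] by simp
    have "(\<Sum>d=1..p - 1. gf d) \<le> (\<Sum>d=1..p - 1. 9 * real (Suc d) powr (-(2 * g)))"
    proof (intro sum_mono)
      fix d
      have "(exp 1)\<^sup>2 * (1 - g)\<^sup>2 \<le> 9 * 1"
        using e2 g by (intro mult_mono) (auto simp: power_le_one)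
      then show "gf d \<le> 9 * real (Suc d) powr (-(2 * g))"
        unfolding gf_def using mult_right_mono[of _ _ "real (Suc d) powr (-(2 * g))"] by simp
    qed
    also have "\<dots> = 9 * (\<Sum>k=Suc 1..Suc (p - 1). real k powr (-(2 * g)))"
      by (simp only: sum.shift_bounds_cl_Suc_ivl sum_distrib_left)
    also have "\<dots> \<le> 9 * G"
      unfolding G_def using p by (intro mult_left_mono sum_mono2) auto
    finally have A: "real n * (\<Sum>d=1..p - 1. gf d) \<le> real n * (9 * G)"
      by (intro mult_left_mono) auto
    have T: "real ((n - p) * (n - p + 1)) / 2 \<le> real n * real n"
    proof -
      have "(n - p) * (n - p + 1) \<le> n * n" using p by (intro mult_mono) auto
      then have "real ((n - p) * (n - p + 1)) \<le> real n * real n"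
        by (metis of_nat_le_iff of_nat_mult)
      moreover have "0 \<le> real n * real n" by simp
      ultimately show ?thesis by linarith
    qed
    have "gf (p - 1) = (exp 1)\<^sup>2 * (1 - g)\<^sup>2 * real p powr (-(2 * g))"
      unfolding gf_def using p by simp
    also have "\<dots> \<le> 9 * ((1 - g)\<^sup>2 * real p powr (-(2 * g)))"
      using e2 by (simp add: mult.assoc mult_right_mono)
    finally have gp: "gf (p - 1) \<le> 9 * ((1 - g)\<^sup>2 * real p powr (-(2 * g)))" .
    have gp0: "0 \<le> gf (p - 1)" unfolding gf_def by simp
    have "real ((n - p) * (n - p + 1)) / 2 * gf (p - 1)
        \<le> (real n * real n) * (9 * ((1 - g)\<^sup>2 * real p powr (-(2 * g))))"
      using T gp gp0 by (intro mult_mono) auto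
    also have "\<dots> = real n * (9 * X\<^sup>2)" unfolding X2 by (simp add: algebra_simps)
    finally show ?thesis using A by linarith
  qed
  also have "\<dots> \<le> real n * (10 * (G + X\<^sup>2))"
  proof -
    have "real n * 1 \<le> real n * G" using G1 n0 by (intro mult_left_mono) auto
    moreover have "0 \<le> real n * X\<^sup>2" using n0 by simp
    ultimately have "real n \<le> real n * G + real n * X\<^sup>2" by linarith
    then show ?thesis by (simp add: algebra_simps)
  qed
  finally have F: "(frob_norm n (Bmat g p n))\<^sup>2 \<le> real n * (10 * (G + X\<^sup>2))" .
  have "frob_norm n (Bmat g p n) \<le> sqrt (real n * (10 * (G + X\<^sup>2)))"
    by (rule real_le_rsqrt[OF F])
  also have "\<dots> = sqrt (real n) * (sqrt 10 * sqrt (G + X\<^sup>2))" by (simp only: real_sqrt_mult)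
  also have "\<dots> \<le> sqrt (real n) * (4 * (sqrt G + X))"
  proof (intro mult_left_mono mult_mono)
    show "sqrt 10 \<le> (4::real)" by (rule real_le_lsqrt) auto
    show "sqrt (G + X\<^sup>2) \<le> sqrt G + X"
      using sqrt_add_le_add_sqrt[of G "X\<^sup>2"] G1 X0 by simp
  qed (use G1 X0 in auto)
  finally have "frob_norm n (Bmat g p n) / sqrt (real n) \<le> 4 * (sqrt G + X)"
    using n0 by (simp add: field_simps)
  then show ?thesis unfolding G_def X_def by (simp add: algebra_simps)
qed



lemma ln2_ge: "1/2 \<le> ln (2::real)"
proof -
  have "ln (1/2::real) \<le> 1/2 - 1" by (rule ln_le_minus_one) auto
  then show ?thesis by (simp add: ln_div)
qed

lemma part2:
  assumes g: "0 < g" "g < 1" and p: "2 \<le> p" "p \<le> n"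
  shows "frob_norm n (Bmat g p n) / sqrt (real n)
              \<le> (if g < 1/2 then
                   8 * real p powr (-g) * (sqrt (real p / (1/2 - g)) + sqrt (real n))
                 else if g = 1/2 then
                   8 * (sqrt (ln (real p)) + sqrt (real n / real p))
                 else
                   8 * (1 / sqrt (g - 1/2) + (1 - g) * sqrt (real n) * real p powr (-g)))"
proof -
  define G where "G = (\<Sum>k=1..p. real k powr (-(2 * g)))"
  define X where "X = (1 - g) * sqrt (real n) * real p powr (-g)"
  have core: "frob_norm n (Bmat g p n) / sqrt (real n) \<le> 4 * sqrt G + 4 * X"
    using part2_core[OF assms] unfolding G_def X_def .
  have p1: "1 \<le> p" "real p > 0" using p by auto
  have X0: "0 \<le> X" using g unfolding X_def by simp
  have pg0: "0 \<le> real p powr (-g)" by simp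
  show ?thesis
  proof (cases "g < 1/2")
    case True
    have "G \<le> real p powr (1 - 2 * g) / (1 - 2 * g)"
      unfolding G_def using Gbound_lt[of "2 * g" p] g True p1 by simp
    also have "\<dots> \<le> real p powr (-g) * real p powr (-g) * (real p / (1/2 - g))"
    proof -
      have e: "real p powr (1 - 2 * g) = real p powr (-g) * real p powr (-g) * real p"
      proof -
        have "1 - 2 * g = -g + -g + 1" by simp
        then have "real p powr (1 - 2 * g) = real p powr (-g + -g + 1)" by simp
        also have "\<dots> = real p powr (-g) * real p powr (-g) * real p powr 1" by (simp only: powr_add)
        finally show ?thesis using p1 by simp
      qed
      have "1 / (1 - 2 * g) \<le> 1 / (1/2 - g)" using True g by (simp add: field_simps)
      then have "real p powr (-g) * real p powr (-g) * real p * (1 / (1 - 2 * g))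
          \<le> real p powr (-g) * real p powr (-g) * real p * (1 / (1/2 - g))"
        by (intro mult_left_mono) auto
      then show ?thesis unfolding e by simp
    qed
    finally have "sqrt G \<le> sqrt (real p powr (-g) * real p powr (-g) * (real p / (1/2 - g)))"
      by simp
    also have "\<dots> = real p powr (-g) * sqrt (real p / (1/2 - g))"
      by (simp only: real_sqrt_mult real_sqrt_mult_self) simp
    finally have sG: "sqrt G \<le> real p powr (-g) * sqrt (real p / (1/2 - g))" .
    have "(1 - g) * (real p powr (-g) * sqrt (real n)) \<le> 1 * (real p powr (-g) * sqrt (real n))"
      by (intro mult_right_mono) (use g in auto)
    moreover have "X = (1 - g) * (real p powr (-g) * sqrt (real n))"
      unfolding X_def by (simp only: mult.assoc mult.commute[of "sqrt (real n)"])
    ultimately have sX: "X \<le> real p powr (-g) * sqrt (real n)" by simp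
    have "frob_norm n (Bmat g p n) / sqrt (real n)
        \<le> 4 * (real p powr (-g) * sqrt (real p / (1/2 - g))) + 4 * (real p powr (-g) * sqrt (real n))"
      using core sG sX by linarith
    also have "\<dots> \<le> 8 * real p powr (-g) * (sqrt (real p / (1/2 - g)) + sqrt (real n))"
    proof -
      have "0 \<le> real p powr (-g) * sqrt (real p / (1/2 - g))" using True by simp
      moreover have "0 \<le> real p powr (-g) * sqrt (real n)" by simp
      moreover have "8 * real p powr (-g) * (sqrt (real p / (1/2 - g)) + sqrt (real n))
         = 8 * (real p powr (-g) * sqrt (real p / (1/2 - g))) + 8 * (real p powr (-g) * sqrt (real n))"
        by (simp only: distrib_left mult.assoc)
      ultimately show ?thesis by linarith
    qed
    finally show ?thesis using True by simp
  next
    case False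
    show ?thesis
    proof (cases "g = 1/2")
      case True
      have "G \<le> 1 + ln (real p)"
      proof -
        have e: "-(2 * g) = -1" using True by simp
        have "G = (\<Sum>k=1..p. real k powr (-1))" unfolding G_def e by (rule refl)
        then show ?thesis using Gbound_eq[of p] p1 by linarith
      qed
      also have "\<dots> \<le> 4 * ln (real p)"
      proof -
        have "ln 2 \<le> ln (real p)" using p by simp
        then show ?thesis using ln2_ge by linarith
      qed
      finally have "sqrt G \<le> sqrt (4 * ln (real p))" by simp
      also have "\<dots> = 2 * sqrt (ln (real p))" by (simp add: real_sqrt_mult)
      finally have sG: "sqrt G \<le> 2 * sqrt (ln (real p))" .
      have pw: "real p powr (-g) = 1 / sqrt (real p)"
      proof -
        have "real p powr (-g) = 1 / real p powr (1/2)" unfolding True by (rule powr_minus_divide)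
        also have "real p powr (1/2) = sqrt (real p)" by (rule powr_half_sqrt) simp
        finally show ?thesis .
      qed
      have "X = (1 - 1/2) * sqrt (real n) * (1 / sqrt (real p))"
      proof -
        have g12: "1 - g = 1 - 1/2" using True by simp
        show ?thesis unfolding X_def pw g12 by (rule refl)
      qed
      then have "X = 1/2 * (sqrt (real n) / sqrt (real p))" by simp
      then have sX: "X = 1/2 * sqrt (real n / real p)" by (simp add: real_sqrt_divide)
      have "0 \<le> sqrt (ln (real p))" using p by simp
      moreover have "0 \<le> sqrt (real n / real p)" by simp
      moreover have "8 * (sqrt (ln (real p)) + sqrt (real n / real p)) = 8 * sqrt (ln (real p)) + 8 * sqrt (real n / real p)"
        by (rule distrib_left)
      ultimately have "frob_norm n (Bmat g p n) / sqrt (real n)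
          \<le> 8 * (sqrt (ln (real p)) + sqrt (real n / real p))"
        using core sG sX by linarith
      then show ?thesis by (simp only: if_not_P[OF False] if_P[OF True])
    next
      case False2: False
      then have gt: "1/2 < g" using False by simp
      have "G \<le> 1 + 1 / (2 * g - 1)"
        unfolding G_def using Gbound_gt[of "2 * g" p] gt p1 by simp
      also have "\<dots> \<le> 1 / (g - 1/2)"
      proof -
        have "0 \<le> (2*g-1)*(1-g)" using gt g by simp
        then have h: "0 \<le> 3*g - 2*g*g - 1" by (simp add: algebra_simps)
        show ?thesis using gt g h by (simp add: field_simps)
      qed
      finally have "sqrt G \<le> sqrt (1 / (g - 1/2))" by simp
      then have sG: "sqrt G \<le> 1 / sqrt (g - 1/2)" by (simp add: real_sqrt_divide)
      have "0 \<le> 1 / sqrt (g - 1/2)" using gt by simp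
      moreover have "8 * (1 / sqrt (g - 1/2) + X) = 8 * (1 / sqrt (g - 1/2)) + 8 * X" by (rule distrib_left)
      ultimately have "frob_norm n (Bmat g p n) / sqrt (real n)
          \<le> 8 * (1 / sqrt (g - 1/2) + X)"
        using core sG X0 by linarith
      then show ?thesis unfolding X_def by (simp only: if_not_P[OF False] if_not_P[OF False2])
    qed
  qed
qed



theorem mainTheorem7:
  shows "(\<forall>(\<gamma>::real) (n::nat) (p::nat). 0 < \<gamma> \<and> \<gamma> < 1 \<and> 2 \<le> p \<and> p \<le> n \<longrightarrow>
            (frob_norm n (Bmat \<gamma> p n))\<^sup>2
              \<le> real n + real n / (Gamma (1 - \<gamma>))\<^sup>2 * genharm (p - 1) (2 * \<gamma>)
                + real ((n - p) * (n - p + 1)) / (2 * (Gamma (1 - \<gamma>))\<^sup>2)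
                  * (1 / (real (p - 1) powr (2 * \<gamma>))))
       \<and> (\<exists>K::real. \<forall>(\<gamma>::real) (n::nat) (p::nat). 0 < \<gamma> \<and> \<gamma> < 1 \<and> 2 \<le> p \<and> p \<le> n \<longrightarrow>
            frob_norm n (Bmat \<gamma> p n) / sqrt (real n)
              \<le> (if \<gamma> < 1/2 then
                   K * real p powr (-\<gamma>) * (sqrt (real p / (1/2 - \<gamma>)) + sqrt (real n))
                 else if \<gamma> = 1/2 then
                   K * (sqrt (ln (real p)) + sqrt (real n / real p))
                 else
                   K * (1 / sqrt (\<gamma> - 1/2) + (1 - \<gamma>) * sqrt (real n) * real p powr (-\<gamma>))))"
proof (intro conjI)
  show "\<forall>(\<gamma>::real) (n::nat) (p::nat). 0 < \<gamma> \<and> \<gamma> < 1 \<and> 2 \<le> p \<and> p \<le> n \<longrightarrow>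
            (frob_norm n (Bmat \<gamma> p n))\<^sup>2
              \<le> real n + real n / (Gamma (1 - \<gamma>))\<^sup>2 * genharm (p - 1) (2 * \<gamma>)
                + real ((n - p) * (n - p + 1)) / (2 * (Gamma (1 - \<gamma>))\<^sup>2)
                  * (1 / (real (p - 1) powr (2 * \<gamma>)))"
  proof (intro allI impI)
    fix \<gamma> :: real and n p :: nat
    assume h: "0 < \<gamma> \<and> \<gamma> < 1 \<and> 2 \<le> p \<and> p \<le> n"
    show "(frob_norm n (Bmat \<gamma> p n))\<^sup>2
              \<le> real n + real n / (Gamma (1 - \<gamma>))\<^sup>2 * genharm (p - 1) (2 * \<gamma>)
                + real ((n - p) * (n - p + 1)) / (2 * (Gamma (1 - \<gamma>))\<^sup>2)
                  * (1 / (real (p - 1) powr (2 * \<gamma>)))"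
      by (rule part1) (use h in auto)
  qed
next
  show "\<exists>K::real. \<forall>(\<gamma>::real) (n::nat) (p::nat). 0 < \<gamma> \<and> \<gamma> < 1 \<and> 2 \<le> p \<and> p \<le> n \<longrightarrow>
            frob_norm n (Bmat \<gamma> p n) / sqrt (real n)
              \<le> (if \<gamma> < 1/2 then
                   K * real p powr (-\<gamma>) * (sqrt (real p / (1/2 - \<gamma>)) + sqrt (real n))
                 else if \<gamma> = 1/2 then
                   K * (sqrt (ln (real p)) + sqrt (real n / real p))
                 else
                   K * (1 / sqrt (\<gamma> - 1/2) + (1 - \<gamma>) * sqrt (real n) * real p powr (-\<gamma>)))"
  proof (rule exI[of _ 8], intro allI impI)
    fix \<gamma> :: real and n p :: nat
    assume h: "0 < \<gamma> \<and> \<gamma> < 1 \<and> 2 \<le> p \<and> p \<le> n"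
    show "frob_norm n (Bmat \<gamma> p n) / sqrt (real n)
              \<le> (if \<gamma> < 1/2 then
                   8 * real p powr (-\<gamma>) * (sqrt (real p / (1/2 - \<gamma>)) + sqrt (real n))
                 else if \<gamma> = 1/2 then
                   8 * (sqrt (ln (real p)) + sqrt (real n / real p))
                 else
                   8 * (1 / sqrt (\<gamma> - 1/2) + (1 - \<gamma>) * sqrt (real n) * real p powr (-\<gamma>)))"
      by (rule part2) (use h in auto)
  qed
qed

end
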